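(* Let $r\ge 2$ and $F\in\mathcal{F}_r(n)$. If $F\not\cong T_r(n)$, then there is a vertex $u\in V(F)$ such that \[ e\bigl(F[N_F(u)]\bigr)>e\bigl(T_{r-1}(d_F(u))\bigr). \]
   Context: $e(\cdot)$ is the number of edges; $N_F(u)$ and $d_F(u)$ are the neighborhood and degree of $u$ in $F$, and $F[X]$ is the induced subgraph. $T_k(m)$ is the complete $k$-partite graph on $m$ vertices with part sizes differing by at most one. The family $\mathcal{F}_r(n)$: write $n=ra+b$ with $0\le b<r$ and $a=\lfloor n/r\rfloor\ge 1$. If $b=0$, $\mathcal{F}_r(n)$ is the set of all $(r-1)a$-regular graphs on $n$ vertices. If $1\le b<r$, $\mathcal{F}_r(n)$ is the set of all graphs $G$ on $n$ vertices having a partition $V(G)=X\sqcup Y$ with $|X|=b(a+1)$, $|Y|=(r-b)a$, such that every vertex of $X$ is adjacent to every vertex of $Y$, $G[X]$ is $(b-1)(a+1)$-regular, and $G[Y]$ is $(r-b-1)a$-regular. *)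

theory Defs
  imports Main
begin

type_synonym 'a graph = "'a set \<times> 'a set set"

definition verts :: "'a graph \<Rightarrow> 'a set" where "verts G = fst G"
definition edges :: "'a graph \<Rightarrow> 'a set set" where "edges G = snd G"

definition simple_graph :: "'a graph \<Rightarrow> bool" where
  "simple_graph G \<longleftrightarrow> finite (verts G) \<and>
     (\<forall>e\<in>edges G. \<exists>x y. x \<noteq> y \<and> x \<in> verts G \<and> y \<in> verts G \<and> e = {x, y})"

definition nbhd :: "'a graph \<Rightarrow> 'a \<Rightarrow> 'a set" where
  "nbhd G u = {v \<in> verts G. {u, v} \<in> edges G}"

definition degree :: "'a graph \<Rightarrow> 'a \<Rightarrow> nat" where
  "degree G u = card (nbhd G u)"

definition induced :: "'a graph \<Rightarrow> 'a set \<Rightarrow> 'a graph" where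
  "induced G X = (X, {e \<in> edges G. e \<subseteq> X})"

definition num_edges :: "'a graph \<Rightarrow> nat" where
  "num_edges G = card (edges G)"

definition regular :: "'a graph \<Rightarrow> nat \<Rightarrow> bool" where
  "regular G d \<longleftrightarrow> (\<forall>v\<in>verts G. degree G v = d)"

text \<open>Turan graph T_k(m): vertices 0..m-1, vertex i in part (i mod k); parts have sizes
  differing by at most one.\<close>
definition turan :: "nat \<Rightarrow> nat \<Rightarrow> nat graph" where
  "turan k m = ({0..<m}, {{i, j} | i j. i < m \<and> j < m \<and> i mod k \<noteq> j mod k})"

definition graph_iso :: "'a graph \<Rightarrow> 'b graph \<Rightarrow> bool" where
  "graph_iso G H \<longleftrightarrow> (\<exists>f. bij_betw f (verts G) (verts H) \<and>
     (\<forall>x\<in>verts G. \<forall>y\<in>verts G. {x, y} \<in> edges G \<longleftrightarrow> {f x, f y} \<in> edges H))"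

definition family_F :: "nat \<Rightarrow> nat \<Rightarrow> 'a graph \<Rightarrow> bool" where
  "family_F r n G \<longleftrightarrow> simple_graph G \<and> card (verts G) = n \<and> n div r \<ge> 1 \<and>
     (let a = n div r; b = n mod r in
       (if b = 0 then regular G ((r - 1) * a)
        else (\<exists>X Y. X \<inter> Y = {} \<and> X \<union> Y = verts G \<and>
                card X = b * (a + 1) \<and> card Y = (r - b) * a \<and>
                (\<forall>x\<in>X. \<forall>y\<in>Y. {x, y} \<in> edges G) \<and>
                regular (induced G X) ((b - 1) * (a + 1)) \<and>
                regular (induced G Y) ((r - b - 1) * a))))"

end

theory Submission
  imports Defs
begin

lemma res_class_card:
  assumes k: "k > 0"
  shows "card {i. i < d \<and> i mod k = d mod k} = d div k"
proof -
  have "{i. i < d \<and> i mod k = d mod k} = (\<lambda>t. d mod k + k * t) ` {0..<d div k}"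
  proof (intro set_eqI iffI)
    fix i assume "i \<in> {i. i < d \<and> i mod k = d mod k}"
    then have i: "i < d" "i mod k = d mod k" by auto
    have e1: "i = d mod k + k * (i div k)" using i(2) by (metis add.commute mult_div_mod_eq)
    have e2: "d = d mod k + k * (d div k)" by (metis add.commute mult_div_mod_eq)
    have "k * (i div k) < k * (d div k)" using i(1) e1 e2 by linarith
    then have "i div k < d div k" by simp
    then show "i \<in> (\<lambda>t. d mod k + k * t) ` {0..<d div k}" using e1 by auto
  next
    fix i assume "i \<in> (\<lambda>t. d mod k + k * t) ` {0..<d div k}"
    then obtain t where t: "t < d div k" "i = d mod k + k * t" by auto
    have e2: "d = d mod k + k * (d div k)" by (metis add.commute mult_div_mod_eq)
    have "k * t < k * (d div k)" using t k by simp
    then have "i < d" using t e2 by linarith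
    moreover have "i mod k = d mod k" using t by simp
    ultimately show "i \<in> {i. i < d \<and> i mod k = d mod k}" by simp
  qed
  moreover have "inj_on (\<lambda>t. d mod k + k * t) {0..<d div k}" using k by (auto simp: inj_on_def)
  ultimately show ?thesis by (simp add: card_image)
qed

definition Qf :: "nat \<Rightarrow> nat \<Rightarrow> nat" where
  "Qf k d = (d mod k) * (d div k + 1)^2 + (k - d mod k) * (d div k)^2"

lemma a1: "k = Suc m \<Longrightarrow> (k - 0) * (Suc q)^2 = (m * (q+1)^2 + (k - m) * q^2) + 2 * q + 1"
  for k m q :: nat by (simp add: power2_eq_square algebra_simps)
lemma a2: "Suc m < k \<Longrightarrow> Suc m * (q+1)^2 + (k - Suc m) * q^2 = (m * (q+1)^2 + (k - m) * q^2) + 2 * q + 1"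
  for k m q :: nat
proof -
  assume "Suc m < k"
  then obtain t where "k = Suc m + t" by (metis less_imp_add_positive)
  then show ?thesis by (simp add: power2_eq_square algebra_simps)
qed
lemma a3: "q \<le> d \<Longrightarrow> 2 * T + Q = d * d \<Longrightarrow> T' = T + (d - q) \<Longrightarrow> Q' = Q + 2 * q + 1 \<Longrightarrow>
   2 * T' + Q' = Suc d * Suc d" for T Q T' Q' d q :: nat
  by simp

lemma Qf_Suc:
  assumes k: "k > 0"
  shows "Qf k (Suc d) = Qf k d + 2 * (d div k) + 1"
proof (cases "Suc (d mod k) = k")
  case True
  then have "Suc d mod k = 0" "Suc d div k = Suc (d div k)" by (simp_all add: mod_Suc div_Suc)
  then show ?thesis unfolding Qf_def using a1[OF True[symmetric], of "d div k"] by simp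
next
  case False
  moreover have "d mod k < k" using k by simp
  ultimately have lt: "Suc (d mod k) < k" by simp
  from False have "Suc d mod k = Suc (d mod k)" "Suc d div k = d div k" by (simp_all add: mod_Suc div_Suc)
  then show ?thesis unfolding Qf_def using a2[OF lt, of "d div k"] by simp
qed

lemma turan_edges_Suc:
  assumes k: "k > 0"
  shows "num_edges (turan k (Suc d)) = num_edges (turan k d) + (d - d div k)"
proof -
  define TE where "TE m = {{i, j} | i j. i < m \<and> j < m \<and> i mod k \<noteq> j mod k}" for m
  have ne: "num_edges (turan k m) = card (TE m)" for m
    unfolding num_edges_def edges_def turan_def TE_def by simp
  define A where "A = {i. i < d \<and> i mod k \<noteq> d mod k}"
  have split: "TE (Suc d) = TE d \<union> (\<lambda>i. {i, d}) ` A"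
    unfolding TE_def A_def
  proof (rule set_eqI)
    fix e
    show "e \<in> {{i, j} |i j. i < Suc d \<and> j < Suc d \<and> i mod k \<noteq> j mod k} \<longleftrightarrow>
      e \<in> {{i, j} |i j. i < d \<and> j < d \<and> i mod k \<noteq> j mod k} \<union> (\<lambda>i. {i, d}) ` {i. i < d \<and> i mod k \<noteq> d mod k}"
    proof
      assume "e \<in> {{i, j} |i j. i < Suc d \<and> j < Suc d \<and> i mod k \<noteq> j mod k}"
      then obtain i j where e: "e = {i,j}" "i < Suc d" "j < Suc d" "i mod k \<noteq> j mod k" by blast
      consider "i < d" "j < d" | "i = d" "j < d" | "j = d" "i < d" | "i = d" "j = d" using e by linarith
      then show "e \<in> {{i, j} |i j. i < d \<and> j < d \<and> i mod k \<noteq> j mod k} \<union> (\<lambda>i. {i, d}) ` {i. i < d \<and> i mod k \<noteq> d mod k}"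
      proof cases
        case 1 then show ?thesis using e by blast
      next
        case 2 then have "e = {j, d}" using e by (simp add: insert_commute)
        then show ?thesis using e 2 by auto
      next
        case 3 then show ?thesis using e by auto
      next
        case 4 then show ?thesis using e by auto
      qed
    next
      assume "e \<in> {{i, j} |i j. i < d \<and> j < d \<and> i mod k \<noteq> j mod k} \<union> (\<lambda>i. {i, d}) ` {i. i < d \<and> i mod k \<noteq> d mod k}"
      then show "e \<in> {{i, j} |i j. i < Suc d \<and> j < Suc d \<and> i mod k \<noteq> j mod k}"
      proof
        assume "e \<in> {{i, j} |i j. i < d \<and> j < d \<and> i mod k \<noteq> j mod k}"
        then show ?thesis using less_SucI by blast
      next
        assume "e \<in> (\<lambda>i. {i, d}) ` {i. i < d \<and> i mod k \<noteq> d mod k}"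
        then obtain i where "e = {i, d}" "i < d" "i mod k \<noteq> d mod k" by blast
        then show ?thesis using less_SucI by blast
      qed
    qed
  qed
  have fin: "finite (TE m)" for m
  proof -
    have "TE m \<subseteq> Pow {0..<m}" unfolding TE_def by auto
    then show ?thesis by (rule finite_subset) simp
  qed
  have disj: "TE d \<inter> (\<lambda>i. {i, d}) ` A = {}"
    unfolding TE_def A_def by (auto simp: doubleton_eq_iff)
  have inj: "inj_on (\<lambda>i. {i, d}) A" unfolding A_def inj_on_def by (auto simp: doubleton_eq_iff)
  have cA: "card A = d - d div k"
  proof -
    have "A = {0..<d} - {i. i < d \<and> i mod k = d mod k}" unfolding A_def by auto
    then have "card A = card {0..<d} - card {i. i < d \<and> i mod k = d mod k}"
      by (metis (no_types, lifting) card_Diff_subset finite_atLeastLessThan finite_subset mem_Collect_eq subsetI atLeastLessThan_iff zero_le)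
    then show ?thesis using res_class_card[OF k] by simp
  qed
  have "card (TE (Suc d)) = card (TE d) + card ((\<lambda>i. {i, d}) ` A)"
    unfolding split by (rule card_Un_disjoint) (use fin disj in \<open>auto simp: A_def\<close>)
  then show ?thesis using ne cA card_image[OF inj] by simp
qed

lemma turan_edges_formula:
  assumes k: "k > 0"
  shows "2 * num_edges (turan k d) + Qf k d = d * d"
proof (induction d)
  case 0
  then show ?case unfolding num_edges_def edges_def turan_def Qf_def by simp
next
  case (Suc d)
  have "d div k \<le> d" by simp
  then show ?case using a3 Suc turan_edges_Suc[OF k, of d] Qf_Suc[OF k, of d] by blast
qed

lemma Qf_eval:
  assumes k: "k > 0" and "d = k * q + s" and "s \<le> k"
  shows "Qf k d = s * (q + 1)^2 + (k - s) * q^2"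
proof (cases "s = k")
  case True
  then have "d = k * (q+1)" using assms by simp
  then show ?thesis using True k unfolding Qf_def by simp
next
  case False
  then have "s < k" using assms by simp
  then have "d div k = q" "d mod k = s" using assms by simp_all
  then show ?thesis unfolding Qf_def by simp
qed

lemma sg_edge_form:
  assumes "simple_graph G" "e \<in> edges G"
  shows "\<exists>x y. x \<noteq> y \<and> x \<in> verts G \<and> y \<in> verts G \<and> e = {x, y}"
proof -
  have "\<forall>e\<in>edges G. \<exists>x y. x \<noteq> y \<and> x \<in> verts G \<and> y \<in> verts G \<and> e = {x, y}"
    using assms(1) unfolding simple_graph_def by simp
  then show ?thesis using assms(2) by (rule bspec)
qed

lemma sg_edge:
  assumes "simple_graph G" "{x, y} \<in> edges G"
  shows "x \<in> verts G \<and> y \<in> verts G \<and> x \<noteq> y"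
proof -
  obtain a b where ab: "a \<noteq> b" "a \<in> verts G" "b \<in> verts G" "{x, y} = {a, b}"
    using sg_edge_form[OF assms] by blast
  then show ?thesis by (metis doubleton_eq_iff)
qed

lemma sg_finite: "simple_graph G \<Longrightarrow> finite (verts G)"
  unfolding simple_graph_def by simp

lemma sg_edges_finite:
  assumes "simple_graph G" shows "finite (edges G)"
proof -
  have "edges G \<subseteq> Pow (verts G)"
  proof
    fix e assume "e \<in> edges G"
    then obtain x y where "x \<in> verts G" "y \<in> verts G" "e = {x, y}"
      using sg_edge_form[OF assms] by blast
    then show "e \<in> Pow (verts G)" by simp
  qed
  moreover have "finite (Pow (verts G))" using sg_finite[OF assms] by simp
  ultimately show ?thesis by (rule finite_subset)
qed

lemma nbhd_sub: "nbhd G u \<subseteq> verts G" unfolding nbhd_def by auto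

lemma nbhd_sym: "u \<in> verts G \<Longrightarrow> v \<in> verts G \<Longrightarrow> v \<in> nbhd G u \<longleftrightarrow> u \<in> nbhd G v"
proof -
  have "{u, v} = {v, u}" by (rule insert_commute)
  then show "u \<in> verts G \<Longrightarrow> v \<in> verts G \<Longrightarrow> v \<in> nbhd G u \<longleftrightarrow> u \<in> nbhd G v"
    unfolding nbhd_def by simp
qed

lemma nbhd_self: assumes "simple_graph G" shows "u \<notin> nbhd G u"
proof
  assume "u \<in> nbhd G u"
  then have "{u, u} \<in> edges G" unfolding nbhd_def by simp
  then show False using sg_edge[OF assms, of u u] by simp
qed

lemma handshake:
  assumes G: "simple_graph G" and S: "S \<subseteq> verts G"
  shows "(\<Sum>v\<in>S. card (nbhd G v \<inter> S)) = 2 * card {e \<in> edges G. e \<subseteq> S}"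
proof -
  have finS: "finite S" using S sg_finite[OF G] finite_subset by blast
  define P where "P = Sigma S (\<lambda>v. nbhd G v \<inter> S)"
  have cP: "card P = (\<Sum>v\<in>S. card (nbhd G v \<inter> S))"
    unfolding P_def using finS by (simp add: finite_subset[OF _ finS])
  define ES where "ES = {e \<in> edges G. e \<subseteq> S}"
  define pr where "pr e = {(x, y). x \<in> e \<and> y \<in> e \<and> x \<noteq> y}" for e :: "'a set"
  have finES: "finite ES" unfolding ES_def using sg_edges_finite[OF G] by simp
  have ES2: "\<exists>a b. a \<noteq> b \<and> e = {a, b}" if "e \<in> ES" for e
    using that sg_edge_form[OF G, of e] unfolding ES_def by blast
  have PU: "P = \<Union> (pr ` ES)"
  proof (intro set_eqI iffI)
    fix p assume "p \<in> P"
    then obtain v w where p: "p = (v, w)" "v \<in> S" "w \<in> S" "w \<in> nbhd G v" unfolding P_def by blast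
    then have "{v, w} \<in> edges G" unfolding nbhd_def by simp
    then have "v \<noteq> w" using sg_edge[OF G] by blast
    then have "{v, w} \<in> ES" "p \<in> pr {v, w}" using p \<open>{v, w} \<in> edges G\<close> unfolding ES_def pr_def by auto
    then show "p \<in> \<Union> (pr ` ES)" by blast
  next
    fix p assume "p \<in> \<Union> (pr ` ES)"
    then obtain e where e: "e \<in> ES" "p \<in> pr e" by blast
    obtain a b where ab: "a \<noteq> b" "e = {a, b}" using ES2[OF e(1)] by blast
    obtain x y where p: "p = (x, y)" "x \<in> e" "y \<in> e" "x \<noteq> y" using e(2) unfolding pr_def by blast
    have "e = {x, y}" using ab p by auto
    then have "{x, y} \<in> edges G" "x \<in> S" "y \<in> S" using e(1) unfolding ES_def by auto
    then show "p \<in> P" unfolding P_def nbhd_def using S p by auto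
  qed
  have c2: "card (pr e) = 2" if e1: "e \<in> ES" for e
  proof -
    obtain a b where ab: "a \<noteq> b" "e = {a, b}" using ES2[OF e1] by blast
    then have "pr e = {(a, b), (b, a)}" unfolding pr_def by auto
    then show ?thesis using ab by simp
  qed
  have finpr: "finite (pr e)" if "e \<in> ES" for e using c2[OF that] by (metis card.infinite zero_neq_numeral)
  have disj: "pr e \<inter> pr e' = {}" if ee: "e \<in> ES" "e' \<in> ES" "e \<noteq> e'" for e e'
  proof (rule ccontr)
    assume "pr e \<inter> pr e' \<noteq> {}"
    then obtain x y where "(x, y) \<in> pr e" "(x, y) \<in> pr e'" by auto
    moreover obtain a b where "a \<noteq> b" "e = {a, b}" using ES2[OF ee(1)] by blast
    moreover obtain a' b' where "a' \<noteq> b'" "e' = {a', b'}" using ES2[OF ee(2)] by blast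
    ultimately have "e = {x, y}" "e' = {x, y}" unfolding pr_def by auto
    then show False using ee by simp
  qed
  have "card P = (\<Sum>e\<in>ES. card (pr e))"
    unfolding PU by (rule card_UN_disjoint) (use finES finpr disj in auto)
  also have "\<dots> = 2 * card ES" using c2 by simp
  finally show ?thesis using cP ES_def by simp
qed

lemma key:
  assumes G: "simple_graph G" and n: "card (verts G) = n" and k: "k > 0"
    and D: "\<forall>x\<in>verts G. degree G x + cs x = n"
    and S: "\<forall>u\<in>verts G. (\<Sum>v\<in>nbhd G u. cs v) \<le> Qf k (degree G u)"
    and H: "\<forall>u\<in>verts G. num_edges (induced G (nbhd G u)) \<le> num_edges (turan k (degree G u))"
    and u: "u \<in> verts G" and v: "v \<in> nbhd G u"
  shows "verts G - nbhd G u \<subseteq> nbhd G v"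
proof -
  define V where "V = verts G"
  define N where "N = nbhd G u"
  define d where "d = card N"
  have finV: "finite V" unfolding V_def using sg_finite[OF G] .
  have NV: "N \<subseteq> V" unfolding N_def V_def by (rule nbhd_sub)
  have finN: "finite N" using NV finV finite_subset by blast
  have dn: "d \<le> n" unfolding d_def using card_mono[OF finV NV] n V_def by simp
  have cVN: "card (V - N) = n - d" unfolding d_def using card_Diff_subset[OF finN NV] n V_def by simp
  have hs: "(\<Sum>w\<in>N. card (nbhd G w \<inter> N)) = 2 * num_edges (induced G N)"
    using handshake[OF G NV[unfolded V_def]] unfolding num_edges_def induced_def edges_def by simp
  have NVw: "w \<in> V" if "w \<in> N" for w using that NV by blast
  have tm: "d \<le> card (nbhd G w \<inter> N) + cs w" if w: "w \<in> N" for w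
  proof -
    have fw: "finite (nbhd G w)" using finite_subset[OF nbhd_sub finV[unfolded V_def]] .
    have "card (nbhd G w) = card (nbhd G w \<inter> N) + card (nbhd G w - N)"
      using card_Int_Diff[OF fw, of N] by simp
    moreover have "card (nbhd G w - N) \<le> card (V - N)"
      by (rule card_mono) (use finV nbhd_sub[of G w] V_def in auto)
    moreover have "card (nbhd G w) + cs w = n" using D NVw[OF w] unfolding degree_def V_def by simp
    ultimately show ?thesis using cVN dn by linarith
  qed
  have sum1: "(\<Sum>w\<in>N. d) \<le> (\<Sum>w\<in>N. card (nbhd G w \<inter> N) + cs w)"
    by (rule sum_mono) (use tm in auto)
  have "(\<Sum>w\<in>N. card (nbhd G w \<inter> N) + cs w) = 2 * num_edges (induced G N) + (\<Sum>w\<in>N. cs w)"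
    using hs by (simp add: sum.distrib)
  also have "\<dots> \<le> 2 * num_edges (turan k d) + Qf k d"
    using H S u unfolding N_def d_def degree_def V_def by (simp add: add_mono)
  also have "\<dots> = d * d" by (rule turan_edges_formula[OF k])
  also have "\<dots> = (\<Sum>w\<in>N. d)" unfolding d_def by simp
  finally have eqs: "(\<Sum>w\<in>N. card (nbhd G w \<inter> N) + cs w) \<le> (\<Sum>w\<in>N. d)" .
  have tv: "d = card (nbhd G v \<inter> N) + cs v"
  proof (rule ccontr)
    assume "d \<noteq> card (nbhd G v \<inter> N) + cs v"
    then have "d < card (nbhd G v \<inter> N) + cs v" using tm v N_def by fastforce
    then have "(\<Sum>w\<in>N. d) < (\<Sum>w\<in>N. card (nbhd G w \<inter> N) + cs w)"
      by (intro sum_strict_mono_ex1) (use finN tm v N_def in auto)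
    then show False using eqs by simp
  qed
  have fv: "finite (nbhd G v)" using finite_subset[OF nbhd_sub finV[unfolded V_def]] .
  have "card (nbhd G v) = card (nbhd G v \<inter> N) + card (nbhd G v - N)"
    using card_Int_Diff[OF fv, of N] by simp
  moreover have "card (nbhd G v) + cs v = n" using D NVw v N_def unfolding degree_def V_def by simp
  ultimately have "card (nbhd G v - N) = card (V - N)" using tv cVN dn by linarith
  moreover have "nbhd G v - N \<subseteq> V - N" using nbhd_sub[of G v] V_def by blast
  ultimately have "nbhd G v - N = V - N" by (intro card_subset_eq) (use finV in auto)
  then show ?thesis unfolding V_def N_def by blast
qed

lemma iso_core:
  fixes V X :: "'a set" and cls :: "'a \<Rightarrow> 'a set" and r a b :: nat
  assumes finV: "finite V" and cV: "card V = r * a + b" and br: "b < r" and a1: "a \<ge> 1"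
    and XV: "X \<subseteq> V" and cX: "card X = b * (a + 1)"
    and cls_in: "\<forall>x\<in>V. x \<in> cls x \<and> cls x \<subseteq> V"
    and cls_eq: "\<forall>x\<in>V. \<forall>y\<in>cls x. cls y = cls x"
    and cls_card: "\<forall>x\<in>V. card (cls x) = (if x \<in> X then a + 1 else a)"
  shows "\<exists>f. bij_betw f V {0..<r * a + b} \<and> (\<forall>x\<in>V. \<forall>y\<in>V. (f x mod r = f y mod r) \<longleftrightarrow> cls x = cls y)"
proof -
  define n where "n = r * a + b"
  have cls_eqD: "cls y = cls x" if "x \<in> V" "y \<in> cls x" for x y
    using cls_eq that by blast
  have cls_inD: "x \<in> cls x" "cls x \<subseteq> V" if "x \<in> V" for x
    using cls_in that by blast+
  have cls_cardD: "card (cls x) = (if x \<in> X then a + 1 else a)" if "x \<in> V" for x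
    using cls_card that by blast
  have disj: "cls x \<inter> cls y = {}" if "x \<in> V" "y \<in> V" "cls x \<noteq> cls y" for x y
  proof (rule ccontr)
    assume "cls x \<inter> cls y \<noteq> {}"
    then obtain z where "z \<in> cls x" "z \<in> cls y" by blast
    then have "cls z = cls x" "cls z = cls y" using cls_eqD that by blast+
    then show False using that(3) by simp
  qed
  have memX: "z \<in> X \<longleftrightarrow> x \<in> X" if "x \<in> V" "z \<in> cls x" for x z
  proof -
    have zV: "z \<in> V" using cls_inD(2)[OF that(1)] that(2) by blast
    have "cls z = cls x" using cls_eqD that by blast
    then have "card (cls z) = card (cls x)" by simp
    then have "(if z \<in> X then a + 1 else a) = (if x \<in> X then a + 1 else a)"
      using cls_cardD[OF that(1)] cls_cardD[OF zV] by simp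
    then show ?thesis by (cases "z \<in> X"; cases "x \<in> X") auto
  qed
  define ClX where "ClX = cls ` X"
  define ClY where "ClY = cls ` (V - X)"
  have finX: "finite X" using finV XV finite_subset by blast
  have UX: "\<Union> ClX = X"
  proof
    show "\<Union> ClX \<subseteq> X" unfolding ClX_def using memX XV by blast
    show "X \<subseteq> \<Union> ClX" unfolding ClX_def using cls_in XV by blast
  qed
  have UY: "\<Union> ClY = V - X"
  proof
    show "\<Union> ClY \<subseteq> V - X" unfolding ClY_def using memX cls_in by blast
    show "V - X \<subseteq> \<Union> ClY" unfolding ClY_def using cls_in by blast
  qed
  have finClX: "finite ClX" unfolding ClX_def using finX by simp
  have finClY: "finite ClY" unfolding ClY_def using finV by simp
  have p3ClX: "card c = a + 1" if "c \<in> ClX" for c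
    using that unfolding ClX_def using cls_cardD XV by auto
  have p4ClX: "c1 \<inter> c2 = {}" if "c1 \<in> ClX" "c2 \<in> ClX" "c1 \<noteq> c2" for c1 c2
    using that unfolding ClX_def using disj XV by blast
  have "(a + 1) * card ClX = card (\<Union> ClX)"
    by (rule card_partition[OF finClX]) (use UX finX p3ClX p4ClX in auto)
  then have "(a + 1) * card ClX = (a + 1) * b" using UX cX by (simp only: mult.commute)
  then have cClX: "card ClX = b" by (simp only: mult_cancel1) simp
  have cVX: "card (V - X) = (r - b) * a" using card_Diff_subset[OF finX XV] cV cX
    by (simp add: algebra_simps diff_mult_distrib)
  have p3ClY: "card c = a" if "c \<in> ClY" for c
    using that unfolding ClY_def using cls_cardD by auto
  have p4ClY: "c1 \<inter> c2 = {}" if "c1 \<in> ClY" "c2 \<in> ClY" "c1 \<noteq> c2" for c1 c2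
    using that unfolding ClY_def using disj by blast
  have "a * card ClY = card (\<Union> ClY)"
    by (rule card_partition[OF finClY]) (use UY finV p3ClY p4ClY in auto)
  then have "a * card ClY = a * (r - b)" using UY cVX by (simp only: mult.commute)
  then have cClY: "card ClY = r - b" using a1 by (simp only: mult_cancel1) simp
  obtain gX where gX: "bij_betw gX ClX {0..<b}"
    using bij_betw_iff_card[OF finClX, of "{0..<b}"] cClX by auto
  obtain gY where gY: "bij_betw gY ClY {b..<r}"
    using bij_betw_iff_card[OF finClY, of "{b..<r}"] cClY by auto
  define g where "g C = (if C \<in> ClX then gX C else gY C)" for C
  have inClX: "cls x \<in> ClX \<longleftrightarrow> x \<in> X" if "x \<in> V" for x
  proof
    assume "cls x \<in> ClX"
    then obtain y where "y \<in> X" "cls x = cls y" unfolding ClX_def by blast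
    then show "x \<in> X" using memX[of y x] cls_in that XV by auto
  qed (simp add: ClX_def)
  have gx: "x \<in> X \<Longrightarrow> g (cls x) < b" if "x \<in> V" for x
    using inClX[OF that] gX unfolding g_def bij_betw_def ClX_def by auto
  have gy: "x \<notin> X \<Longrightarrow> b \<le> g (cls x) \<and> g (cls x) < r" if "x \<in> V" for x
  proof -
    assume "x \<notin> X"
    then have "cls x \<in> ClY" "cls x \<notin> ClX" using inClX[OF that] that unfolding ClY_def by auto
    then show ?thesis using gY unfolding g_def bij_betw_def by auto
  qed
  have gr: "g (cls x) < r" if "x \<in> V" for x
  proof (cases "x \<in> X")
    case True then show ?thesis using gx[OF that] br by simp
  next
    case False then show ?thesis using gy[OF that] by simp
  qed
  have ginj: "g (cls x) = g (cls y) \<Longrightarrow> cls x = cls y" if "x \<in> V" "y \<in> V" for x y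
  proof -
    assume eq: "g (cls x) = g (cls y)"
    show ?thesis
    proof (cases "x \<in> X")
      case True
      have "y \<in> X"
      proof (rule ccontr)
        assume "y \<notin> X"
        then show False using gx[OF that(1) True] gy[OF that(2)] eq by simp
      qed
      then have "cls x \<in> ClX" "cls y \<in> ClX" using True inClX that by auto
      moreover then have "gX (cls x) = gX (cls y)" using eq unfolding g_def by simp
      moreover have "inj_on gX ClX" using gX unfolding bij_betw_def by simp
      ultimately show ?thesis by (meson inj_onD)
    next
      case False
      have "y \<notin> X"
      proof
        assume "y \<in> X"
        then show False using gx[OF that(2)] gy[OF that(1) False] eq by simp
      qed
      then have "cls x \<in> ClY" "cls y \<in> ClY" "cls x \<notin> ClX" "cls y \<notin> ClX"
        using False inClX[OF that(1)] inClX[OF that(2)] that unfolding ClY_def by blast+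
      moreover then have "gY (cls x) = gY (cls y)" using eq unfolding g_def by simp
      moreover have "inj_on gY ClY" using gY unfolding bij_betw_def by simp
      ultimately show ?thesis by (meson inj_onD)
    qed
  qed
  have "\<forall>C\<in>cls ` V. \<exists>h. bij_betw h C {0..<card C}"
  proof
    fix C assume "C \<in> cls ` V"
    then obtain x where "x \<in> V" "C = cls x" by blast
    then have "finite C" using cls_inD(2) finV finite_subset by metis
    then show "\<exists>h. bij_betw h C {0..<card C}" using bij_betw_iff_card[of C "{0..<card C}"] by simp
  qed
  then have "\<exists>Hh. \<forall>C\<in>cls ` V. bij_betw (Hh C) C {0..<card C}" by (rule bchoice)
  then obtain Hh where Hh: "\<forall>C\<in>cls ` V. bij_betw (Hh C) C {0..<card C}" by blast
  define f where "f x = r * Hh (cls x) x + g (cls x)" for x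
  have fmod: "f x mod r = g (cls x)" if "x \<in> V" for x
    unfolding f_def using gr[OF that] by simp
  have fdiv: "f x div r = Hh (cls x) x" if "x \<in> V" for x
    unfolding f_def using gr[OF that] by simp
  have Hlt: "Hh (cls x) x < card (cls x)" if "x \<in> V" for x
  proof -
    have "bij_betw (Hh (cls x)) (cls x) {0..<card (cls x)}" using Hh that by blast
    then have "Hh (cls x) ` cls x = {0..<card (cls x)}" unfolding bij_betw_def by blast
    moreover have "x \<in> cls x" using cls_inD(1)[OF that] .
    ultimately show ?thesis by (metis atLeastLessThan_iff imageI)
  qed
  have finj: "inj_on f V"
  proof (rule inj_onI)
    fix x y assume xy: "x \<in> V" "y \<in> V" "f x = f y"
    then have "g (cls x) = g (cls y)" using fmod[OF xy(1)] fmod[OF xy(2)] by simp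
    then have c: "cls x = cls y" using ginj xy by blast
    have "Hh (cls x) x = Hh (cls x) y" using fdiv[OF xy(1)] fdiv[OF xy(2)] xy(3) c by simp
    moreover have "x \<in> cls x" "y \<in> cls x" using cls_in xy c by auto
    moreover have "inj_on (Hh (cls x)) (cls x)" using Hh xy unfolding bij_betw_def by blast
    ultimately show "x = y" unfolding inj_on_def by blast
  qed
  have frange: "f x < n" if "x \<in> V" for x
  proof (cases "x \<in> X")
    case True
    then have "Hh (cls x) x \<le> a" using Hlt[OF that] cls_card that by auto
    then have "r * Hh (cls x) x \<le> r * a" by simp
    then show ?thesis unfolding f_def n_def using gx[OF that True] by linarith
  next
    case False
    then have "Hh (cls x) x + 1 \<le> a" using Hlt[OF that] cls_card that by auto
    then have "r * (Hh (cls x) x + 1) \<le> r * a" by (rule mult_left_mono) simp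
    then show ?thesis unfolding f_def n_def using gr[OF that] by (simp add: algebra_simps)
  qed
  have "f ` V \<subseteq> {0..<n}" using frange by auto
  moreover have "card (f ` V) = card {0..<n}" using card_image[OF finj] cV n_def by simp
  ultimately have "f ` V = {0..<n}" by (intro card_subset_eq) auto
  then have "bij_betw f V {0..<n}" using finj unfolding bij_betw_def by simp
  moreover have "\<forall>x\<in>V. \<forall>y\<in>V. (f x mod r = f y mod r) \<longleftrightarrow> cls x = cls y"
  proof (intro ballI)
    fix x y assume xy: "x \<in> V" "y \<in> V"
    show "(f x mod r = f y mod r) \<longleftrightarrow> cls x = cls y"
      using fmod[OF xy(1)] fmod[OF xy(2)] ginj[OF xy] by auto
  qed
  ultimately show ?thesis unfolding n_def by blast
qed

lemma arithX:
  fixes a b r b' m :: nat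
  assumes "b = Suc b'" "r = b + Suc m"
  shows "(b - 1) * (a + 1) + (r - b) * a = (r - 1) * a + (b - 1)"
    and "b - 1 \<le> r - 1" and "(r - 1) - (b - 1) = r - b"
    and "(b - 1) * (a + 1) + (r - b) * a + (a + 1) = r * a + b"
  using assms by (simp_all add: algebra_simps)

lemma arithY:
  fixes a b r b' m :: nat
  assumes "b = Suc b'" "r = b + Suc m"
  shows "b * (a + 1) + (r - b - 1) * a = (r - 1) * a + b"
    and "b \<le> r - 1" and "(r - 1) - b = r - b - 1"
    and "b * (a + 1) + (r - b - 1) * a + a = r * a + b"
  using assms by (simp_all add: algebra_simps)

lemma arith0:
  fixes a r :: nat
  assumes "r \<ge> 1"
  shows "(r - 1) * a + a = r * a"
  using assms by (simp add: algebra_simps diff_mult_distrib)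

lemma induced_nbhd:
  assumes "u \<in> X" "X \<subseteq> verts G"
  shows "nbhd (induced G X) u = nbhd G u \<inter> X"
  using assms unfolding nbhd_def induced_def verts_def edges_def by auto

lemma sum_cs:
  assumes "finite N"
  shows "(\<Sum>v\<in>N. if v \<in> X then a + 1 else a) = (a + 1) * card (N \<inter> X) + a * card (N - X)"
proof -
  have "(\<Sum>v\<in>N. if v \<in> X then a + 1 else a) = (\<Sum>v\<in>N \<inter> X. a + 1) + (\<Sum>v\<in>N - X. a)"
    using sum.If_cases[OF assms, of "\<lambda>v. v \<in> X" "\<lambda>_. a + 1" "\<lambda>_. a"]
    by (simp add: Diff_eq)
  then show ?thesis by (simp add: mult.commute)
qed

lemma family_data:
  fixes F :: "'a graph"
  assumes r: "r \<ge> 2" and fam: "family_F r n F"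
  defines "a \<equiv> n div r" and "b \<equiv> n mod r"
  shows "\<exists>X. X \<subseteq> verts F \<and> card X = b * (a + 1) \<and>
    (\<forall>x\<in>verts F. degree F x + (if x \<in> X then a + 1 else a) = n) \<and>
    (\<forall>u\<in>verts F. (\<Sum>v\<in>nbhd F u. if v \<in> X then a + 1 else a) \<le> Qf (r - 1) (degree F u))"
proof -
  have G: "simple_graph F" and cV: "card (verts F) = n" and a1: "a \<ge> 1"
    using fam unfolding family_F_def a_def by auto
  have finV: "finite (verts F)" using sg_finite[OF G] .
  have n: "n = r * a + b" unfolding a_def b_def by simp
  have br: "b < r" unfolding b_def using r by simp
  have k: "r - 1 > 0" using r by simp
  have finN: "finite (nbhd F u)" for u using finite_subset[OF nbhd_sub finV] .
  show ?thesis
  proof (cases "b = 0")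
    case True
    then have reg: "regular F ((r - 1) * a)" using fam unfolding family_F_def a_def b_def Let_def by simp
    have deg: "degree F x = (r - 1) * a" if "x \<in> verts F" for x using reg that unfolding regular_def by blast
    show ?thesis
    proof (intro exI[of _ "{}"] conjI ballI)
      show "{} \<subseteq> verts F" by simp
      show "card {} = b * (a + 1)" using True by simp
    next
      fix x assume "x \<in> verts F"
      then show "degree F x + (if x \<in> {} then a + 1 else a) = n"
        using deg arith0[of r a] r n True by simp
    next
      fix u assume u: "u \<in> verts F"
      have "(\<Sum>v\<in>nbhd F u. if v \<in> {} then a + 1 else a) = card (nbhd F u) * a" by simp
      also have "\<dots> = (r - 1) * a * a" using deg[OF u] unfolding degree_def by simp
      also have "\<dots> = Qf (r - 1) (degree F u)"
        using Qf_eval[OF k, of "(r - 1) * a" a 0] deg[OF u] by (simp add: power2_eq_square)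
      finally show "(\<Sum>v\<in>nbhd F u. if v \<in> {} then a + 1 else a) \<le> Qf (r - 1) (degree F u)" by simp
    qed
  next
    case False
    then obtain X Y where XY: "X \<inter> Y = {}" "X \<union> Y = verts F"
      "card X = b * (a + 1)" "card Y = (r - b) * a"
      "\<forall>x\<in>X. \<forall>y\<in>Y. {x, y} \<in> edges F"
      "regular (induced F X) ((b - 1) * (a + 1))"
      "regular (induced F Y) ((r - b - 1) * a)"
      using fam unfolding family_F_def a_def b_def Let_def by auto
    obtain b' where b': "b = Suc b'" using False by (cases b) auto
    obtain m where m: "r = b + Suc m" using br by (metis less_iff_Suc_add add_Suc_right)
    have XV: "X \<subseteq> verts F" and YV: "Y \<subseteq> verts F" using XY by auto
    have Yeq: "Y = verts F - X" using XY by auto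
    have degX: "card (nbhd F u \<inter> X) = (b - 1) * (a + 1)" if "u \<in> X" for u
      using XY(6) that induced_nbhd[OF that XV] unfolding regular_def degree_def induced_def verts_def
      by auto
    have degY: "card (nbhd F u \<inter> Y) = (r - b - 1) * a" if "u \<in> Y" for u
      using XY(7) that induced_nbhd[OF that YV] unfolding regular_def degree_def induced_def verts_def
      by auto
    have NXY: "nbhd F u - X = Y" if "u \<in> X" for u
    proof
      show "nbhd F u - X \<subseteq> Y" using nbhd_sub[of F u] Yeq by blast
      show "Y \<subseteq> nbhd F u - X" unfolding nbhd_def using XY(5) that YV XY(1) by blast
    qed
    have NYX: "nbhd F u \<inter> X = X" if "u \<in> Y" for u
    proof
      show "nbhd F u \<inter> X \<subseteq> X" by blast
      show "X \<subseteq> nbhd F u \<inter> X"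
      proof
        fix x assume x: "x \<in> X"
        then have "{x, u} \<in> edges F" using XY(5) that by blast
        then have "{u, x} \<in> edges F" by (simp add: insert_commute)
        then show "x \<in> nbhd F u \<inter> X" unfolding nbhd_def using x XV by blast
      qed
    qed
    have NYY: "nbhd F u - X = nbhd F u \<inter> Y" for u using Yeq nbhd_sub[of F u] by blast
    have split: "card (nbhd F u) = card (nbhd F u \<inter> X) + card (nbhd F u - X)" for u
      using card_Int_Diff[OF finN] by simp
    have dX: "degree F u = (b - 1) * (a + 1) + (r - b) * a" if "u \<in> X" for u
      unfolding degree_def using split[of u] degX[OF that] NXY[OF that] XY(4) by simp
    have dY: "degree F u = b * (a + 1) + (r - b - 1) * a" if "u \<in> Y" for u
      unfolding degree_def using split[of u] NYX[OF that] degY[OF that] NYY[of u] XY(3) by simp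
    show ?thesis
    proof (intro exI[of _ X] conjI ballI)
      show "X \<subseteq> verts F" by fact
      show "card X = b * (a + 1)" by fact
    next
      fix x assume x: "x \<in> verts F"
      show "degree F x + (if x \<in> X then a + 1 else a) = n"
      proof (cases "x \<in> X")
        case True then show ?thesis using dX arithX(4)[OF b' m, of a] n by simp
      next
        case False then have "x \<in> Y" using x XY by auto
        then show ?thesis using dY False arithY(4)[OF b' m, of a] n by simp
      qed
    next
      fix u assume u: "u \<in> verts F"
      have sc: "(\<Sum>v\<in>nbhd F u. if v \<in> X then a + 1 else a) = (a + 1) * card (nbhd F u \<inter> X) + a * card (nbhd F u - X)"
        by (rule sum_cs[OF finN])
      show "(\<Sum>v\<in>nbhd F u. if v \<in> X then a + 1 else a) \<le> Qf (r - 1) (degree F u)"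
      proof (cases "u \<in> X")
        case True
        have "Qf (r - 1) (degree F u) = (b - 1) * (a + 1)^2 + (r - b) * a^2"
          using Qf_eval[OF k, of "degree F u" a "b - 1"] dX[OF True] arithX(1)[OF b' m, of a] arithX(2,3)[OF b' m] by simp
        moreover have "(\<Sum>v\<in>nbhd F u. if v \<in> X then a + 1 else a) = (a + 1) * ((b - 1) * (a + 1)) + a * ((r - b) * a)"
          using sc degX[OF True] NXY[OF True] XY(4) by simp
        ultimately show ?thesis using b' m by (simp add: power2_eq_square algebra_simps)
      next
        case False then have uY: "u \<in> Y" using u XY by auto
        have "Qf (r - 1) (degree F u) = b * (a + 1)^2 + (r - b - 1) * a^2"
          using Qf_eval[OF k, of "degree F u" a b] dY[OF uY] arithY(1)[OF b' m, of a] arithY(2,3)[OF b' m] by simp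
        moreover have "(\<Sum>v\<in>nbhd F u. if v \<in> X then a + 1 else a) = (a + 1) * (b * (a + 1)) + a * ((r - b - 1) * a)"
          using sc NYX[OF uY] degY[OF uY] NYY[of u] XY(3) by simp
        ultimately show ?thesis using b' m by (simp add: power2_eq_square algebra_simps)
      qed
    qed
  qed
qed

lemma turan_edge_iff:
  assumes "i < n" "j < n"
  shows "{i, j} \<in> edges (turan r n) \<longleftrightarrow> i mod r \<noteq> j mod r"
proof
  assume "{i, j} \<in> edges (turan r n)"
  then obtain i' j' where "{i, j} = {i', j'}" "i' mod r \<noteq> j' mod r"
    unfolding turan_def edges_def by auto
  then show "i mod r \<noteq> j mod r" by (metis doubleton_eq_iff)
next
  assume "i mod r \<noteq> j mod r"
  then show "{i, j} \<in> edges (turan r n)" using assms unfolding turan_def edges_def by auto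
qed

theorem lemma3p6:
  fixes F :: "'a graph" and r n :: nat
  assumes "r \<ge> 2"
    and "family_F r n F"
    and "\<not> graph_iso F (turan r n)"
  shows "\<exists>u\<in>verts F. num_edges (induced F (nbhd F u)) > num_edges (turan (r - 1) (degree F u))"
proof (rule ccontr)
  assume neg: "\<not> ?thesis"
  then have H: "\<forall>u\<in>verts F. num_edges (induced F (nbhd F u)) \<le> num_edges (turan (r - 1) (degree F u))"
    by (simp add: not_less)
  define V where "V = verts F"
  define a where "a = n div r"
  define b where "b = n mod r"
  have G: "simple_graph F" and cV: "card V = n" and a1: "a \<ge> 1"
    using assms(2) unfolding family_F_def a_def V_def by auto
  have finV: "finite V" using sg_finite[OF G] V_def by simp
  have n: "n = r * a + b" unfolding a_def b_def by simp
  have br: "b < r" unfolding b_def using assms(1) by simp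
  have k: "r - 1 > 0" using assms(1) by simp
  obtain X where X: "X \<subseteq> V" "card X = b * (a + 1)"
    "\<forall>x\<in>V. degree F x + (if x \<in> X then a + 1 else a) = n"
    "\<forall>u\<in>V. (\<Sum>v\<in>nbhd F u. if v \<in> X then a + 1 else a) \<le> Qf (r - 1) (degree F u)"
    using family_data[OF assms(1,2)] unfolding a_def b_def V_def by blast
  have P: "V - nbhd F u \<subseteq> nbhd F v" if "u \<in> V" "v \<in> nbhd F u" for u v
    using key[OF G _ k _ _ H, of n "\<lambda>x. if x \<in> X then a + 1 else a" u v] cV X(3,4) that
    unfolding V_def by blast
  define cls where "cls x = V - nbhd F x" for x
  have NV: "nbhd F x \<subseteq> V" for x unfolding V_def by (rule nbhd_sub)
  have sym: "y \<in> nbhd F x \<longleftrightarrow> x \<in> nbhd F y" if "x \<in> V" "y \<in> V" for x y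
    using nbhd_sym[of x F y] that unfolding V_def by blast
  have self: "x \<in> cls x" if "x \<in> V" for x unfolding cls_def using that nbhd_self[OF G] by blast
  have csub: "cls y \<subseteq> cls x" if "x \<in> V" "y \<in> cls x" for x y
  proof
    fix z assume z: "z \<in> cls y"
    have yV: "y \<in> V" "y \<notin> nbhd F x" using that unfolding cls_def by auto
    have zV: "z \<in> V" "z \<notin> nbhd F y" using z unfolding cls_def by auto
    show "z \<in> cls x"
    proof (rule ccontr)
      assume "z \<notin> cls x"
      then have "z \<in> nbhd F x" using zV unfolding cls_def by blast
      then have "V - nbhd F x \<subseteq> nbhd F z" using P that(1) by blast
      then have "y \<in> nbhd F z" using yV by blast
      then have "z \<in> nbhd F y" using sym zV(1) yV(1) by blast
      then show False using zV by blast
    qed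
  qed
  have ceq: "cls y = cls x" if "x \<in> V" "y \<in> cls x" for x y
  proof
    show "cls y \<subseteq> cls x" using csub that by blast
    have yV: "y \<in> V" "y \<notin> nbhd F x" using that unfolding cls_def by auto
    then have "x \<notin> nbhd F y" using sym that(1) by blast
    then have "x \<in> cls y" unfolding cls_def using that(1) by blast
    then show "cls x \<subseteq> cls y" using csub yV(1) by blast
  qed
  have ccard: "card (cls x) = (if x \<in> X then a + 1 else a)" if "x \<in> V" for x
  proof -
    have "card (cls x) = card V - card (nbhd F x)"
      unfolding cls_def using card_Diff_subset[OF finite_subset[OF NV finV] NV] .
    then show ?thesis using X(3) that cV unfolding degree_def by fastforce
  qed
  obtain f where f: "bij_betw f V {0..<r * a + b}"
    "\<forall>x\<in>V. \<forall>y\<in>V. (f x mod r = f y mod r) \<longleftrightarrow> cls x = cls y"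
  proof -
    have "\<exists>f. bij_betw f V {0..<r * a + b} \<and> (\<forall>x\<in>V. \<forall>y\<in>V. (f x mod r = f y mod r) \<longleftrightarrow> cls x = cls y)"
    proof (rule iso_core[OF finV _ br a1 X(1,2)])
      show "card V = r * a + b" using cV n by simp
      show "\<forall>x\<in>V. x \<in> cls x \<and> cls x \<subseteq> V" using self unfolding cls_def by blast
      show "\<forall>x\<in>V. \<forall>y\<in>cls x. cls y = cls x" using ceq by blast
      show "\<forall>x\<in>V. card (cls x) = (if x \<in> X then a + 1 else a)" using ccard by blast
    qed
    then show ?thesis using that by blast
  qed
  have frange: "f x < n" if "x \<in> V" for x using f(1) that n unfolding bij_betw_def by auto
  have edge_iff: "{x, y} \<in> edges F \<longleftrightarrow> cls x \<noteq> cls y" if "x \<in> V" "y \<in> V" for x y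
  proof (cases "x = y")
    case True
    then show ?thesis using sg_edge[OF G, of x y] by auto
  next
    case False
    have "{x, y} \<in> edges F \<longleftrightarrow> y \<in> nbhd F x" unfolding nbhd_def using that V_def by simp
    also have "\<dots> \<longleftrightarrow> y \<notin> cls x" unfolding cls_def using that by blast
    also have "\<dots> \<longleftrightarrow> cls y \<noteq> cls x"
      using ceq[OF that(1)] self[OF that(2)] by blast
    finally show ?thesis by blast
  qed
  have "graph_iso F (turan r n)"
    unfolding graph_iso_def
  proof (intro exI conjI ballI)
    show "bij_betw f (verts F) (verts (turan r n))"
      using f(1) n unfolding V_def turan_def verts_def by simp
  next
    fix x y assume xy: "x \<in> verts F" "y \<in> verts F"
    then have xy': "x \<in> V" "y \<in> V" unfolding V_def by auto
    show "{x, y} \<in> edges F \<longleftrightarrow> {f x, f y} \<in> edges (turan r n)"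
      using edge_iff[OF xy'] turan_edge_iff[OF frange[OF xy'(1)] frange[OF xy'(2)], of r]
        f(2) xy' by blast
  qed
  then show False using assms(3) by simp
qed

end
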